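(* If $G\subset\mathrm{Diff}^1_+([0,1])$ is a group without hyperbolic fixed points, then its completion $I^\infty(G)$ is contained in $\mathrm{Diff}^1_+([0,1])$ and is without hyperbolic fixed points.
   Context: $G\subset \mathrm{Diff}^1_+([0,1])$ is without hyperbolic fixed points if $Dg(x)=1$ for every $g\in G$ and every $x\in\mathrm{Fix}(g)$ (such a group has no linked pairs of successive fixed points). A homeomorphism $h\in\mathrm{Homeo}_+([0,1])$ is induced by $g$ if $h(x)\in\{x,g(x)\}$ for every $x\in[0,1]$. For a group $G$, $I(G)$ is the group generated by all homeomorphisms induced by elements of $G$; $I^0(G)=G$, $I^{n+1}(G)=I(I^n(G))$, and the completion is $I^\infty(G)=\bigcup_n I^n(G)$. *)

theory Defs
  imports "HOL-Analysis.Analysis"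
begin

text \<open>Maps of [0,1] are represented as functions real => real that are the identity
outside [0,1] (canonical representatives), so composition and inverse are the
ordinary ones on real.\<close>

definition Homeo01 :: "(real \<Rightarrow> real) set" where
  "Homeo01 = {f. continuous_on {0..1} f \<and> strict_mono_on {0..1} f
              \<and> f ` {0..1} = {0..1} \<and> (\<forall>x. x \<notin> {0..1} \<longrightarrow> f x = x)}"

text \<open>Orientation preserving C^1 diffeomorphisms of [0,1] (one-sided derivatives at the
endpoints): the derivative exists, is continuous and positive on [0,1]
(so the inverse is C^1 as well).\<close>
definition Diff1 :: "(real \<Rightarrow> real) set" where
  "Diff1 = {f. f \<in> Homeo01 \<and>
     (\<exists>f'. continuous_on {0..1} f' \<and>
        (\<forall>x\<in>{0..1}. (f has_real_derivative f' x) (at x within {0..1}) \<and> f' x > 0))}"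

definition is_group :: "(real \<Rightarrow> real) set \<Rightarrow> bool" where
  "is_group G \<longleftrightarrow> G \<subseteq> Homeo01 \<and> id \<in> G \<and> (\<forall>f\<in>G. \<forall>g\<in>G. f \<circ> g \<in> G)
                 \<and> (\<forall>f\<in>G. inv f \<in> G)"

definition no_hyp_fixed :: "(real \<Rightarrow> real) set \<Rightarrow> bool" where
  "no_hyp_fixed G \<longleftrightarrow> (\<forall>g\<in>G. \<forall>x\<in>{0..1}. g x = x \<longrightarrow>
       (g has_real_derivative 1) (at x within {0..1}))"

definition induced_by :: "(real \<Rightarrow> real) \<Rightarrow> (real \<Rightarrow> real) \<Rightarrow> bool" where
  "induced_by h g \<longleftrightarrow> h \<in> Homeo01 \<and> (\<forall>x\<in>{0..1}. h x = x \<or> h x = g x)"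

inductive_set gen_group :: "(real \<Rightarrow> real) set \<Rightarrow> (real \<Rightarrow> real) set" for S where
  gen_id: "id \<in> gen_group S"
| gen_mult: "f \<in> gen_group S \<Longrightarrow> s \<in> S \<Longrightarrow> f \<circ> s \<in> gen_group S"
| gen_mult_inv: "f \<in> gen_group S \<Longrightarrow> s \<in> S \<Longrightarrow> f \<circ> inv s \<in> gen_group S"

definition I_op :: "(real \<Rightarrow> real) set \<Rightarrow> (real \<Rightarrow> real) set" where
  "I_op G = gen_group {h. \<exists>g\<in>G. induced_by h g}"

definition completion :: "(real \<Rightarrow> real) set \<Rightarrow> (real \<Rightarrow> real) set" where
  "completion G = (\<Union>n. (I_op ^^ n) G)"

end

theory Submission
  imports Defs
begin

lemma H_cont: "f \<in> Homeo01 \<Longrightarrow> continuous_on {0..1} f" by (simp add: Homeo01_def)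
lemma H_mono: "f \<in> Homeo01 \<Longrightarrow> strict_mono_on {0..1} f" by (simp add: Homeo01_def)
lemma H_img: "f \<in> Homeo01 \<Longrightarrow> f ` {0..1} = {0..1}" by (simp add: Homeo01_def)
lemma H_out: "f \<in> Homeo01 \<Longrightarrow> x \<notin> {0..1} \<Longrightarrow> f x = x" by (simp add: Homeo01_def)

lemma H_in_iff: assumes "f \<in> Homeo01" shows "f x \<in> {0..1} \<longleftrightarrow> x \<in> {0..1}"
  using H_img[OF assms] H_out[OF assms, of x] by (cases "x \<in> {0..1}") auto

lemma H_bij: assumes "f \<in> Homeo01" shows "bij f"
proof (rule bijI)
  show "inj f"
  proof (rule injI)
    fix x y assume e: "f x = f y"
    show "x = y"
    proof (cases "x \<in> {0..1}")
      case True
      then have "y \<in> {0..1}" using e H_in_iff[OF assms] by metis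
      then show ?thesis using True e strict_mono_on_imp_inj_on[OF H_mono[OF assms]]
        by (meson inj_onD)
    next
      case False
      then have "y \<notin> {0..1}" using e H_in_iff[OF assms] by metis
      then show ?thesis using False e H_out[OF assms] by metis
    qed
  qed
  show "surj f"
  proof -
    { fix y :: real
      have "y \<in> range f"
      proof (cases "y \<in> {0..1}")
        case True then show ?thesis using H_img[OF assms] by blast
      next
        case False then show ?thesis using H_out[OF assms, of y] by (metis rangeI)
      qed }
    then show ?thesis by blast
  qed
qed

lemma H_inv_app: "f \<in> Homeo01 \<Longrightarrow> inv f (f x) = x"
  using H_bij bij_is_inj inv_f_f by metis
lemma H_app_inv: "f \<in> Homeo01 \<Longrightarrow> f (inv f y) = y"
  using H_bij bij_is_surj surj_f_inv_f by metis

lemma H_le: assumes "f \<in> Homeo01" "x \<in> {0..1}" "y \<in> {0..1}"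
  shows "f x \<le> f y \<longleftrightarrow> x \<le> y"
  using H_mono[OF assms(1)] assms(2,3)
  by (smt (verit) strict_mono_onD)

lemma H_inv: assumes "f \<in> Homeo01" shows "inv f \<in> Homeo01"
proof -
  have c: "continuous_on (f ` {0..1}) (inv f)"
    by (rule continuous_on_inv[OF H_cont[OF assms]]) (auto simp: H_inv_app[OF assms])
  have iin: "y \<in> {0..1} \<Longrightarrow> inv f y \<in> {0..1}" for y
    using H_in_iff[OF assms, of "inv f y"] H_app_inv[OF assms, of y] by auto
  have sm: "strict_mono_on {0..1} (inv f)"
  proof (rule strict_mono_onI)
    fix r s :: real assume "r \<in> {0..1}" "s \<in> {0..1}" "r < s"
    then show "inv f r < inv f s"
      using H_le[OF assms iin iin, of s r] H_app_inv[OF assms] by (metis linorder_not_less)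
  qed
  have im: "inv f ` {0..1} = {0..1}"
  proof
    show "inv f ` {0..1} \<subseteq> {0..1}" using iin by auto
    show "{0..1} \<subseteq> inv f ` {0..1}"
    proof
      fix x :: real assume "x \<in> {0..1}"
      then have "f x \<in> {0..1}" using H_in_iff[OF assms] by auto
      then show "x \<in> inv f ` {0..1}" using H_inv_app[OF assms, of x] by (metis imageI)
    qed
  qed
  have out: "\<forall>x. x \<notin> {0..1} \<longrightarrow> inv f x = x"
    using H_out[OF assms] H_inv_app[OF assms] by metis
  show ?thesis using c sm im out H_img[OF assms] by (simp add: Homeo01_def)
qed

lemma H_comp: assumes "f \<in> Homeo01" "g \<in> Homeo01" shows "f \<circ> g \<in> Homeo01"
proof -
  have c: "continuous_on {0..1} (f \<circ> g)"
    by (rule continuous_on_compose[OF H_cont[OF assms(2)]]) (simp add: H_img[OF assms(2)] H_cont[OF assms(1)])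
  have sm: "strict_mono_on {0..1} (f \<circ> g)"
  proof (rule strict_mono_onI)
    fix r s :: real assume a: "r \<in> {0..1}" "s \<in> {0..1}" "r < s"
    then have "g r < g s" using H_mono[OF assms(2)] by (simp add: strict_mono_onD)
    moreover have "g r \<in> {0..1}" "g s \<in> {0..1}" using a H_in_iff[OF assms(2)] by auto
    ultimately show "(f \<circ> g) r < (f \<circ> g) s" using H_mono[OF assms(1)] by (simp add: strict_mono_onD)
  qed
  have im: "(f \<circ> g) ` {0..1} = {0..1}" using H_img[OF assms(1)] H_img[OF assms(2)] by (metis image_comp)
  show ?thesis using c sm im H_out[OF assms(1)] H_out[OF assms(2)] by (simp add: Homeo01_def)
qed

lemma H_id: "id \<in> Homeo01"
  by (auto simp: Homeo01_def strict_mono_on_def)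


lemma deriv_unique01:
  assumes "x \<in> {0..1::real}" "(f has_real_derivative a) (at x within {0..1})"
    "(f has_real_derivative b) (at x within {0..1})"
  shows "a = b"
proof -
  have "at x within {0..1::real} \<noteq> bot"
    using assms(1) trivial_limit_within[of x "{0..1::real}"] islimpt_Icc[of 0 1 x] by auto
  then show ?thesis using has_field_derivative_unique assms(2,3) by blast
qed

lemma H_inv_deriv:
  assumes f: "f \<in> Homeo01" and x: "x \<in> {0..1}"
    and d: "(f has_real_derivative d) (at x within {0..1})" and d0: "d \<noteq> 0"
  shows "(inv f has_real_derivative inverse d) (at (f x) within {0..1})"
proof -
  let ?k = "inv f"
  let ?y = "f x"
  have y: "?y \<in> {0..1}" using x H_in_iff[OF f] by auto
  have kc: "continuous_on {0..1} ?k" using H_cont[OF H_inv[OF f]] .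
  have "(?k \<longlongrightarrow> ?k ?y) (at ?y within {0..1})"
    using kc y continuous_on_eq_continuous_within continuous_within by blast
  then have kt: "(?k \<longlongrightarrow> x) (at ?y within {0..1})" using H_inv_app[OF f] by simp
  have ev: "eventually (\<lambda>z. ?k z \<in> {0..1} - {x}) (at ?y within {0..1})"
    unfolding eventually_at_filter
  proof (rule always_eventually, intro allI impI)
    fix z assume "z \<noteq> ?y" "z \<in> {0..1}"
    then show "?k z \<in> {0..1} - {x}"
      using H_in_iff[OF H_inv[OF f], of z] H_app_inv[OF f, of z] by auto
  qed
  have fl: "filterlim ?k (at x within {0..1}) (at ?y within {0..1})"
    by (rule filterlim_at_withinI[OF kt ev])
  have Q: "((\<lambda>w. (f w - f x) / (w - x)) \<longlongrightarrow> d) (at x within {0..1})"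
    using d has_field_derivative_iff by blast
  have "((\<lambda>z. (f (?k z) - f x) / (?k z - x)) \<longlongrightarrow> d) (at ?y within {0..1})"
    using filterlim_compose[OF Q fl] .
  then have "((\<lambda>z. inverse ((f (?k z) - f x) / (?k z - x))) \<longlongrightarrow> inverse d) (at ?y within {0..1})"
    using d0 by (intro tendsto_inverse) auto
  then have "((\<lambda>z. (?k z - ?k ?y) / (z - ?y)) \<longlongrightarrow> inverse d) (at ?y within {0..1})"
    using H_app_inv[OF f] H_inv_app[OF f] by (simp add: inverse_divide)
  then show ?thesis using has_field_derivative_iff by blast
qed

lemma Diff1E:
  assumes "f \<in> Diff1"
  obtains f' where "f \<in> Homeo01" "continuous_on {0..1} f'"
    "\<And>x. x \<in> {0..1} \<Longrightarrow> (f has_real_derivative f' x) (at x within {0..1})"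
    "\<And>x. x \<in> {0..1} \<Longrightarrow> f' x > 0"
  using assms unfolding Diff1_def by blast

lemma Diff1I:
  assumes "f \<in> Homeo01" "continuous_on {0..1} f'"
    "\<And>x. x \<in> {0..1} \<Longrightarrow> (f has_real_derivative f' x) (at x within {0..1})"
    "\<And>x. x \<in> {0..1} \<Longrightarrow> f' x > 0"
  shows "f \<in> Diff1"
  using assms unfolding Diff1_def by blast

lemma D_id: "id \<in> Diff1"
  by (rule Diff1I[OF H_id, of "\<lambda>_. 1"]) (auto simp: id_def)

lemma D_comp: assumes "f \<in> Diff1" "g \<in> Diff1" shows "f \<circ> g \<in> Diff1"
proof -
  obtain f' where f: "f \<in> Homeo01" "continuous_on {0..1} f'"
    "\<And>x. x \<in> {0..1} \<Longrightarrow> (f has_real_derivative f' x) (at x within {0..1})"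
    "\<And>x. x \<in> {0..1} \<Longrightarrow> f' x > 0" using Diff1E[OF assms(1)] by metis
  obtain g' where g: "g \<in> Homeo01" "continuous_on {0..1} g'"
    "\<And>x. x \<in> {0..1} \<Longrightarrow> (g has_real_derivative g' x) (at x within {0..1})"
    "\<And>x. x \<in> {0..1} \<Longrightarrow> g' x > 0" using Diff1E[OF assms(2)] by metis
  have gi: "x \<in> {0..1} \<Longrightarrow> g x \<in> {0..1}" for x using H_in_iff[OF g(1)] by auto
  show ?thesis
  proof (rule Diff1I[of _ "\<lambda>x. f' (g x) * g' x"])
    show "f \<circ> g \<in> Homeo01" by (rule H_comp[OF f(1) g(1)])
    show "continuous_on {0..1} (\<lambda>x. f' (g x) * g' x)"
      by (intro continuous_on_mult continuous_on_compose2[OF f(2) H_cont[OF g(1)]] g(2)) (use gi in blast)+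
    fix x :: real assume x: "x \<in> {0..1}"
    show "(f \<circ> g has_real_derivative f' (g x) * g' x) (at x within {0..1})"
      using DERIV_image_chain[of f "f' (g x)" g x "{0..1}" "g' x"] f(3)[OF gi[OF x]] g(3)[OF x]
        H_img[OF g(1)] by simp
    show "f' (g x) * g' x > 0" using f(4)[OF gi[OF x]] g(4)[OF x] by simp
  qed
qed

lemma D_inv: assumes "f \<in> Diff1" shows "inv f \<in> Diff1"
proof -
  obtain f' where f: "f \<in> Homeo01" "continuous_on {0..1} f'"
    "\<And>x. x \<in> {0..1} \<Longrightarrow> (f has_real_derivative f' x) (at x within {0..1})"
    "\<And>x. x \<in> {0..1} \<Longrightarrow> f' x > 0" using Diff1E[OF assms(1)] by metis
  have ki: "y \<in> {0..1} \<Longrightarrow> inv f y \<in> {0..1}" for y using H_in_iff[OF H_inv[OF f(1)]] by auto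
  show ?thesis
  proof (rule Diff1I[of _ "\<lambda>y. inverse (f' (inv f y))"])
    show "inv f \<in> Homeo01" by (rule H_inv[OF f(1)])
    have "continuous_on {0..1} (\<lambda>y. f' (inv f y))"
      by (intro continuous_on_compose2[OF f(2) H_cont[OF H_inv[OF f(1)]]]) (use ki in blast)
    then show "continuous_on {0..1} (\<lambda>y. inverse (f' (inv f y)))"
      using f(4) ki by (intro continuous_on_inverse) (auto simp: less_imp_neq[symmetric])
    fix y :: real assume y: "y \<in> {0..1}"
    have "(inv f has_real_derivative inverse (f' (inv f y))) (at (f (inv f y)) within {0..1})"
      using H_inv_deriv[OF f(1) ki[OF y] f(3)[OF ki[OF y]]] f(4)[OF ki[OF y]] by simp
    then show "(inv f has_real_derivative inverse (f' (inv f y))) (at y within {0..1})"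
      using H_app_inv[OF f(1)] by simp
    show "inverse (f' (inv f y)) > 0" using f(4)[OF ki[OF y]] by simp
  qed
qed


definition Mset :: "(real \<Rightarrow> real) set \<Rightarrow> (real \<Rightarrow> real) set" where
  "Mset G = {f. f \<in> Diff1 \<and> (\<forall>x\<in>{0..1}. \<exists>g\<in>G. \<exists>d. g x = f x \<and>
      (f has_real_derivative d) (at x within {0..1}) \<and> (g has_real_derivative d) (at x within {0..1}))}"

lemma id_deriv: "(id has_real_derivative 1) (at x within S)"
  unfolding id_def by (rule DERIV_ident)

lemma M_id: assumes "is_group G" shows "id \<in> Mset G"
  using assms D_id id_deriv unfolding Mset_def is_group_def by blast

lemma M_comp:
  assumes G: "is_group G" and f: "f \<in> Mset G" and h: "h \<in> Mset G"
  shows "f \<circ> h \<in> Mset G"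
proof -
  have fD: "f \<in> Diff1" and hD: "h \<in> Diff1" using f h by (auto simp: Mset_def)
  have GH: "G \<subseteq> Homeo01" using G by (simp add: is_group_def)
  have hH: "h \<in> Homeo01" using hD by (simp add: Diff1_def)
  have "\<exists>g\<in>G. \<exists>d. g x = (f \<circ> h) x \<and>
      (f \<circ> h has_real_derivative d) (at x within {0..1}) \<and> (g has_real_derivative d) (at x within {0..1})"
    if x: "x \<in> {0..1}" for x
  proof -
    obtain g2 d2 where g2: "g2 \<in> G" "g2 x = h x" "(h has_real_derivative d2) (at x within {0..1})"
      "(g2 has_real_derivative d2) (at x within {0..1})" using h x unfolding Mset_def by blast
    have hx: "h x \<in> {0..1}" using H_in_iff[OF hH] x by auto
    obtain g1 d1 where g1: "g1 \<in> G" "g1 (h x) = f (h x)" "(f has_real_derivative d1) (at (h x) within {0..1})"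
      "(g1 has_real_derivative d1) (at (h x) within {0..1})" using f hx unfolding Mset_def by blast
    have g2H: "g2 \<in> Homeo01" using GH g2(1) by blast
    have a: "(f \<circ> h has_real_derivative d1 * d2) (at x within {0..1})"
      using DERIV_image_chain[of f d1 h x "{0..1}" d2] g1(3) g2(3) H_img[OF hH] by simp
    have b: "(g1 \<circ> g2 has_real_derivative d1 * d2) (at x within {0..1})"
      using DERIV_image_chain[of g1 d1 g2 x "{0..1}" d2] g1(4) g2(4) H_img[OF g2H] g2(2) by simp
    have "g1 \<circ> g2 \<in> G" using G g1(1) g2(1) by (simp add: is_group_def)
    then show ?thesis using a b g1(2) g2(2) by (intro bexI[of _ "g1 \<circ> g2"]) auto
  qed
  then show ?thesis using D_comp[OF fD hD] by (simp add: Mset_def)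
qed

lemma M_inv:
  assumes G: "is_group G" and f: "f \<in> Mset G"
  shows "inv f \<in> Mset G"
proof -
  have fD: "f \<in> Diff1" using f by (auto simp: Mset_def)
  obtain f' where f': "f \<in> Homeo01" "continuous_on {0..1} f'"
    "\<And>x. x \<in> {0..1} \<Longrightarrow> (f has_real_derivative f' x) (at x within {0..1})"
    "\<And>x. x \<in> {0..1} \<Longrightarrow> f' x > 0" using Diff1E[OF fD] by metis
  have GH: "G \<subseteq> Homeo01" using G by (simp add: is_group_def)
  have "\<exists>g\<in>G. \<exists>d. g y = inv f y \<and>
      (inv f has_real_derivative d) (at y within {0..1}) \<and> (g has_real_derivative d) (at y within {0..1})"
    if y: "y \<in> {0..1}" for y
  proof -
    let ?x = "inv f y"
    have x: "?x \<in> {0..1}" using H_in_iff[OF H_inv[OF f'(1)]] y by auto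
    have fx: "f ?x = y" using H_app_inv[OF f'(1)] .
    obtain g d where g: "g \<in> G" "g ?x = f ?x" "(f has_real_derivative d) (at ?x within {0..1})"
      "(g has_real_derivative d) (at ?x within {0..1})" using f x unfolding Mset_def by blast
    have "d = f' ?x" using deriv_unique01[OF x g(3) f'(3)[OF x]] .
    then have d0: "d \<noteq> 0" using f'(4)[OF x] by simp
    have gH: "g \<in> Homeo01" using GH g(1) by blast
    have a: "(inv f has_real_derivative inverse d) (at y within {0..1})"
      using H_inv_deriv[OF f'(1) x g(3) d0] fx by simp
    have b: "(inv g has_real_derivative inverse d) (at y within {0..1})"
      using H_inv_deriv[OF gH x g(4) d0] fx g(2) by simp
    have c: "inv g y = ?x" using H_inv_app[OF gH, of ?x] g(2) fx by simp
    have "inv g \<in> G" using G g(1) by (simp add: is_group_def)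
    then show ?thesis using a b c by blast
  qed
  then show ?thesis using D_inv[OF fD] by (simp add: Mset_def)
qed

lemma M_nohyp:
  assumes G: "no_hyp_fixed G" and f: "f \<in> Mset G" and x: "x \<in> {0..1}" and fx: "f x = x"
  shows "(f has_real_derivative 1) (at x within {0..1})"
proof -
  obtain g d where g: "g \<in> G" "g x = f x" "(f has_real_derivative d) (at x within {0..1})"
      "(g has_real_derivative d) (at x within {0..1})" using f x unfolding Mset_def by blast
  have "(g has_real_derivative 1) (at x within {0..1})" using G g(1,2) fx x unfolding no_hyp_fixed_def by auto
  then have "d = 1" using deriv_unique01[OF x g(4)] by simp
  then show ?thesis using g(3) by simp
qed


lemma induced_local:
  assumes hH: "h \<in> Homeo01" and gH: "g \<in> Homeo01" and ind: "\<forall>y\<in>{0..1}. h y = y \<or> h y = g y"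
    and x: "x \<in> {0..1}" and gx: "g x \<noteq> x"
  shows "\<exists>\<delta>>0. (\<forall>y\<in>{0..1}. dist y x < \<delta> \<longrightarrow> h y = y \<and> g y \<noteq> y)
               \<or> (\<forall>y\<in>{0..1}. dist y x < \<delta> \<longrightarrow> h y = g y \<and> g y \<noteq> y)"
proof -
  define e where "e = \<bar>g x - x\<bar> / 4"
  have e: "e > 0" using gx by (simp add: e_def)
  obtain d1 where d1: "d1 > 0" "\<forall>y\<in>{0..1}. dist y x < d1 \<longrightarrow> dist (h y) (h x) < e"
    using H_cont[OF hH] x e unfolding continuous_on_iff by blast
  obtain d2 where d2: "d2 > 0" "\<forall>y\<in>{0..1}. dist y x < d2 \<longrightarrow> dist (g y) (g x) < e"
    using H_cont[OF gH] x e unfolding continuous_on_iff by blast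
  define d where "d = min (min d1 d2) e"
  have d: "d > 0" using d1 d2 e by (simp add: d_def)
  have near: "\<bar>h y - h x\<bar> < e \<and> \<bar>g y - g x\<bar> < e \<and> \<bar>y - x\<bar> < e"
    if "y \<in> {0..1}" "dist y x < d" for y
    using d1(2) d2(2) that by (auto simp: d_def dist_real_def)
  have hx: "h x = x \<or> h x = g x" using ind x by blast
  then show ?thesis
  proof
    assume hx: "h x = x"
    have "\<forall>y\<in>{0..1}. dist y x < d \<longrightarrow> h y = y \<and> g y \<noteq> y"
    proof (intro ballI impI)
      fix y assume y: "y \<in> {0..1}" "dist y x < d"
      note n = near[OF y]
      have gy: "\<bar>g y - y\<bar> > 2 * e" using n e_def by (auto simp: abs_if split: if_splits)
      have "h y = y \<or> h y = g y" using ind y by blast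
      then show "h y = y \<and> g y \<noteq> y" using n gy hx by auto
    qed
    then show ?thesis using d by blast
  next
    assume hx: "h x = g x"
    have "\<forall>y\<in>{0..1}. dist y x < d \<longrightarrow> h y = g y \<and> g y \<noteq> y"
    proof (intro ballI impI)
      fix y assume y: "y \<in> {0..1}" "dist y x < d"
      note n = near[OF y]
      have gy: "\<bar>g y - y\<bar> > 2 * e" using n e_def by (auto simp: abs_if split: if_splits)
      have "h y = y \<or> h y = g y" using ind y by blast
      then show "h y = g y \<and> g y \<noteq> y" using n gy hx by auto
    qed
    then show ?thesis using d by blast
  qed
qed

lemma induced_M:
  assumes G: "is_group G" and GD: "G \<subseteq> Diff1" and NH: "no_hyp_fixed G"
    and gG: "g \<in> G" and ind: "induced_by h g"
  shows "h \<in> Mset G"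
proof -
  obtain g' where g: "g \<in> Homeo01" "continuous_on {0..1} g'"
    "\<And>x. x \<in> {0..1} \<Longrightarrow> (g has_real_derivative g' x) (at x within {0..1})"
    "\<And>x. x \<in> {0..1} \<Longrightarrow> g' x > 0" using Diff1E[of g] GD gG by blast
  have hH: "h \<in> Homeo01" and hi: "\<forall>y\<in>{0..1}. h y = y \<or> h y = g y"
    using ind by (auto simp: induced_by_def)
  have hall: "h y = y \<or> h y = g y" for y
    using hi H_out[OF hH, of y] by (cases "y \<in> {0..1}") auto
  have idG: "id \<in> G" using G by (simp add: is_group_def)
  have g1: "(g has_real_derivative 1) (at x within {0..1})" if "x \<in> {0..1}" "g x = x" for x
    using NH gG that unfolding no_hyp_fixed_def by blast
  define h' where "h' y = (if h y = y then 1 else g' y)" for y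
  have fixd: "(h has_real_derivative 1) (at x within {0..1})" if x: "x \<in> {0..1}" and gx: "g x = x" for x
  proof -
    have hx: "h x = x" using hall[of x] gx by auto
    have Qg: "((\<lambda>y. (g y - g x) / (y - x)) \<longlongrightarrow> 1) (at x within {0..1})"
      using g1[OF x gx] has_field_derivative_iff by blast
    have Z: "((\<lambda>y. \<bar>(g y - g x) / (y - x) - 1\<bar>) \<longlongrightarrow> 0) (at x within {0..1})"
      by (intro tendsto_rabs_zero LIM_zero Qg)
    have b: "norm ((h y - h x) / (y - x) - 1) \<le> \<bar>(g y - g x) / (y - x) - 1\<bar>" for y
      using hall[of y] hx gx by (cases "y = x") auto
    have "((\<lambda>y. (h y - h x) / (y - x) - 1) \<longlongrightarrow> 0) (at x within {0..1})"
      by (rule Lim_null_comparison[OF always_eventually[OF allI[OF b]] Z])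
    then have "((\<lambda>y. (h y - h x) / (y - x)) \<longlongrightarrow> 1) (at x within {0..1})"
      using LIM_zero_iff by blast
    then show ?thesis using has_field_derivative_iff by blast
  qed
  have main: "(h has_real_derivative h' x) (at x within {0..1}) \<and>
      (\<exists>k\<in>G. \<exists>d. k x = h x \<and> (h has_real_derivative d) (at x within {0..1}) \<and> (k has_real_derivative d) (at x within {0..1}))
      \<and> continuous (at x within {0..1}) h'"
    if x: "x \<in> {0..1}" for x
  proof (cases "g x = x")
    case True
    have hx: "h x = x" using hall[of x] True by auto
    have hx': "h' x = 1" using hx by (simp add: h'_def)
    have gx': "g' x = 1" using deriv_unique01[OF x g(3)[OF x] g1[OF x True]] .
    have gt: "(g' \<longlongrightarrow> 1) (at x within {0..1})"
      using g(2) x gx' continuous_on_eq_continuous_within continuous_within by metis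
    have Z: "((\<lambda>y. \<bar>g' y - 1\<bar>) \<longlongrightarrow> 0) (at x within {0..1})"
      by (intro tendsto_rabs_zero LIM_zero gt)
    have b: "norm (h' y - 1) \<le> \<bar>g' y - 1\<bar>" for y by (simp add: h'_def)
    have "((\<lambda>y. h' y - 1) \<longlongrightarrow> 0) (at x within {0..1})"
      by (rule Lim_null_comparison[OF always_eventually[OF allI[OF b]] Z])
    then have "(h' \<longlongrightarrow> h' x) (at x within {0..1})" using LIM_zero_iff hx' by metis
    then have c: "continuous (at x within {0..1}) h'" using continuous_within by blast
    show ?thesis using fixd[OF x True] hx' c idG id_deriv[of x "{0..1}"] hx by (auto intro!: bexI[of _ id])
  next
    case False
    obtain d where d: "d > 0" and
      dd: "(\<forall>y\<in>{0..1}. dist y x < d \<longrightarrow> h y = y \<and> g y \<noteq> y)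
         \<or> (\<forall>y\<in>{0..1}. dist y x < d \<longrightarrow> h y = g y \<and> g y \<noteq> y)"
      using induced_local[OF hH g(1) hi x False] by blast
    from dd show ?thesis
    proof
      assume L: "\<forall>y\<in>{0..1}. dist y x < d \<longrightarrow> h y = y \<and> g y \<noteq> y"
      have hx: "h x = x" using L x d by auto
      have hx': "h' x = 1" using hx by (simp add: h'_def)
      have dv: "(h has_real_derivative 1) (at x within {0..1})"
        by (rule has_field_derivative_transform_within[OF DERIV_ident d x]) (use L in auto)
      have "((\<lambda>_. 1) \<longlongrightarrow> h' x) (at x within {0..1})" using hx' by simp
      then have "(h' \<longlongrightarrow> h' x) (at x within {0..1})"
        by (rule Lim_transform_within[OF _ d]) (use L in \<open>auto simp: h'_def\<close>)
      then have c: "continuous (at x within {0..1}) h'" using continuous_within by blast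
      show ?thesis using dv hx' c idG id_deriv[of x "{0..1}"] hx by (auto intro!: bexI[of _ id])
    next
      assume L: "\<forall>y\<in>{0..1}. dist y x < d \<longrightarrow> h y = g y \<and> g y \<noteq> y"
      have hx: "h x = g x" using L x d by auto
      have hx': "h' x = g' x" using hx False by (simp add: h'_def)
      have dv: "(h has_real_derivative g' x) (at x within {0..1})"
        by (rule has_field_derivative_transform_within[OF g(3)[OF x] d x]) (use L in auto)
      have "(g' \<longlongrightarrow> h' x) (at x within {0..1})"
        using g(2) x hx' continuous_on_eq_continuous_within continuous_within by metis
      then have "(h' \<longlongrightarrow> h' x) (at x within {0..1})"
        by (rule Lim_transform_within[OF _ d]) (use L in \<open>auto simp: h'_def\<close>)
      then have c: "continuous (at x within {0..1}) h'" using continuous_within by blast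
      show ?thesis using dv hx' c gG g(3)[OF x] hx by auto
    qed
  qed
  have hD: "h \<in> Diff1"
  proof (rule Diff1I[OF hH, of h'])
    show "continuous_on {0..1} h'" using main continuous_on_eq_continuous_within by blast
    show "(h has_real_derivative h' x) (at x within {0..1})" if "x \<in> {0..1}" for x using main that by blast
    show "h' x > 0" if "x \<in> {0..1}" for x using g(4)[OF that] by (simp add: h'_def)
  qed
  show ?thesis using hD main unfolding Mset_def by blast
qed


lemma gen_M: assumes G: "is_group G" and S: "S \<subseteq> Mset G" and f: "f \<in> gen_group S"
  shows "f \<in> Mset G"
  using f
proof (induction rule: gen_group.induct)
  case gen_id then show ?case using M_id[OF G] .
next
  case (gen_mult f s) then show ?case using M_comp[OF G] S by blast
next
  case (gen_mult_inv f s) then show ?case using M_comp[OF G] M_inv[OF G] S by blast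
qed

lemma gen_H: assumes S: "S \<subseteq> Homeo01" and f: "f \<in> gen_group S" shows "f \<in> Homeo01"
  using f
proof (induction rule: gen_group.induct)
  case gen_id then show ?case using H_id .
next
  case (gen_mult f s) then show ?case using H_comp S by blast
next
  case (gen_mult_inv f s) then show ?case using H_comp H_inv S by blast
qed

lemma gen_comp: assumes f: "f \<in> gen_group S" and g: "g \<in> gen_group S" shows "f \<circ> g \<in> gen_group S"
  using g
proof (induction rule: gen_group.induct)
  case gen_id then show ?case using f by simp
next
  case (gen_mult g s) then show ?case using gen_group.gen_mult by (metis comp_assoc)
next
  case (gen_mult_inv g s) then show ?case using gen_group.gen_mult_inv by (metis comp_assoc)
qed

lemma gen_inv: assumes S: "S \<subseteq> Homeo01" and f: "f \<in> gen_group S" shows "inv f \<in> gen_group S"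
  using f
proof (induction rule: gen_group.induct)
  case gen_id then show ?case using gen_group.gen_id by (metis inv_id)
next
  case (gen_mult f s)
  have bf: "bij f" using gen_H[OF S gen_mult(1)] H_bij by blast
  have bs: "bij s" using S gen_mult(2) H_bij by blast
  have "inv s \<in> gen_group S" using gen_group.gen_mult_inv[OF gen_group.gen_id gen_mult(2)] by simp
  then show ?case using gen_comp gen_mult.IH o_inv_distrib[OF bf bs] by metis
next
  case (gen_mult_inv f s)
  have bf: "bij f" using gen_H[OF S gen_mult_inv(1)] H_bij by blast
  have bs: "bij s" using S gen_mult_inv(2) H_bij by blast
  have "s \<in> gen_group S" using gen_group.gen_mult[OF gen_group.gen_id gen_mult_inv(2)] by simp
  then show ?case using gen_comp gen_mult_inv.IH o_inv_distrib[OF bf bij_imp_bij_inv[OF bs]] inv_inv_eq[OF bs] by metis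
qed

lemma step:
  assumes G: "is_group G" and GD: "G \<subseteq> Diff1" and NH: "no_hyp_fixed G"
  shows "is_group (I_op G) \<and> I_op G \<subseteq> Diff1 \<and> no_hyp_fixed (I_op G)"
proof -
  let ?S = "{h. \<exists>g\<in>G. induced_by h g}"
  have SM: "?S \<subseteq> Mset G" using induced_M[OF G GD NH] by blast
  have IM: "I_op G \<subseteq> Mset G" unfolding I_op_def using gen_M[OF G SM] by blast
  have MD: "Mset G \<subseteq> Diff1" by (auto simp: Mset_def)
  have SH: "?S \<subseteq> Homeo01" by (auto simp: induced_by_def)
  have grp: "is_group (I_op G)"
    unfolding is_group_def I_op_def
    using gen_H[OF SH] gen_group.gen_id gen_comp gen_inv[OF SH] by blast
  have nh: "no_hyp_fixed (I_op G)"
    unfolding no_hyp_fixed_def using M_nohyp[OF NH] IM by blast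
  show ?thesis using grp IM MD nh by blast
qed

lemma iter: assumes "is_group G" "G \<subseteq> Diff1" "no_hyp_fixed G"
  shows "is_group ((I_op ^^ n) G) \<and> (I_op ^^ n) G \<subseteq> Diff1 \<and> no_hyp_fixed ((I_op ^^ n) G)"
  using assms by (induction n) (simp_all add: step)

theorem lemmal:
  assumes "is_group G" and "G \<subseteq> Diff1" and "no_hyp_fixed G"
  shows "completion G \<subseteq> Diff1 \<and> no_hyp_fixed (completion G)"
proof -
  have "(I_op ^^ n) G \<subseteq> Diff1" "no_hyp_fixed ((I_op ^^ n) G)" for n
    using iter[OF assms, of n] by auto
  then show ?thesis unfolding completion_def no_hyp_fixed_def by blast
qed

end
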